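(* Let $\mathrm{G}$ be a finite undirected graph with vertex set $\mathrm{V}(\mathrm{G})$ of size $N$, with no isolated vertices, maximum degree $d_{\max}$ and minimum degree $d_{\min}$. Let $0 \le \lambda \le 1$ and $0 < p < 1$, and let $\mathcal{K}^{\lambda,0}_p(\mathrm{G}) = [\mathrm{K}^{\lambda,0}_p(k,l)]_{k,l\in\mathrm{V}(\mathrm{G})}$. Then, with $\rho = (1-p)\lambda$ and $\Gamma(\mathbf{A}) = \sum_{i=0}^\infty (i+1)\mathbf{A}^i$, the entrywise inequalities $$\Gamma\!\left(\frac{\rho}{d_{\max}}\mathrm{Adj}(\mathrm{G})\right) \le \mathcal{K}^{\lambda,0}_p(\mathrm{G}) \le \Gamma\!\left(\frac{\rho}{d_{\min}}\mathrm{Adj}(\mathrm{G})\right)$$ hold (series with nonnegative entries are interpreted entrywise in $[0,\infty]$).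
   Context: A random walk $\omega(h)$ with stopping probability $p$ starting at $h$ is the sequence $(j_1 = h, j_2, \dots, j_t)$ where, independently at each step, the walk stops with probability $p$ and otherwise moves from its current vertex to a uniformly random neighbour. A prefix sub-walk of $(j_1,\dots,j_t)$ is a walk $(j_1,\dots,j_r)$ with $1\le r\le t$ (or the empty walk); its length is its number of edges $r-1$. The frequency vector $f^{\omega(h),\lambda}_h \in \mathbb{R}^{\mathrm{V}(\mathrm{G})}$ is $f^{\omega(h),\lambda}_h(i) = \sum_{e\in \mathrm{L}^{\omega(h)}(i)} \lambda^e$, where $\mathrm{L}^{\omega(h)}(i)$ is the multiset of lengths of the prefix sub-walks of $\omega(h)$ that end at $i$. For independent random walks $\omega(k),\omega(l)$ with stopping probability $p$ started at $k$ and $l$, the kernel (with $\alpha = 0$) is $\mathrm{K}^{\lambda,0}_p(k,l) = \mathbb{E}_{\omega(k)}[f^{\omega(k),\lambda}_k]\,\big(\mathbb{E}_{\omega(l)}[f^{\omega(l),\lambda}_l]\big)^\top$. $\mathrm{Adj}(\mathrm{G})$ is the adjacency matrix. *)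

theory Defs
  imports "HOL-Analysis.Analysis"
begin

definition ugraph :: "'a set \<Rightarrow> ('a \<Rightarrow> 'a \<Rightarrow> bool) \<Rightarrow> bool" where
  "ugraph V E \<longleftrightarrow> finite V \<and> (\<forall>x y. E x y \<longrightarrow> x \<in> V \<and> y \<in> V \<and> E y x \<and> x \<noteq> y)"

definition deg :: "'a set \<Rightarrow> ('a \<Rightarrow> 'a \<Rightarrow> bool) \<Rightarrow> 'a \<Rightarrow> nat" where
  "deg V E v = card {u \<in> V. E v u}"

definition no_isolated :: "'a set \<Rightarrow> ('a \<Rightarrow> 'a \<Rightarrow> bool) \<Rightarrow> bool" where
  "no_isolated V E \<longleftrightarrow> (\<forall>v\<in>V. \<exists>u. E v u)"

definition dmax :: "'a set \<Rightarrow> ('a \<Rightarrow> 'a \<Rightarrow> bool) \<Rightarrow> nat" where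
  "dmax V E = Max (deg V E ` V)"

definition dmin :: "'a set \<Rightarrow> ('a \<Rightarrow> 'a \<Rightarrow> bool) \<Rightarrow> nat" where
  "dmin V E = Min (deg V E ` V)"

text \<open>Probability that the random walk with stopping probability p is exactly the
  vertex sequence w = (j_1,...,j_t): it moves t-1 times (each with probability 1-p,
  to a uniformly random neighbour) and then stops (probability p).\<close>
definition walk_prob :: "'a set \<Rightarrow> ('a \<Rightarrow> 'a \<Rightarrow> bool) \<Rightarrow> real \<Rightarrow> 'a list \<Rightarrow> real" where
  "walk_prob V E p w =
     p * (1 - p) ^ (length w - 1) *
     (\<Prod>s<length w - 1. if E (w ! s) (w ! Suc s) then 1 / real (deg V E (w ! s)) else 0)"

text \<open>Frequency vector: sum of lam^(length of prefix sub-walk) over prefix sub-walks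
  ending at i; the prefix (j_1..j_{r+1}) has length r.\<close>
definition freq :: "real \<Rightarrow> 'a list \<Rightarrow> 'a \<Rightarrow> real" where
  "freq lam w i = (\<Sum>r<length w. if w ! r = i then lam ^ r else 0)"

definition exp_freq :: "'a set \<Rightarrow> ('a \<Rightarrow> 'a \<Rightarrow> bool) \<Rightarrow> real \<Rightarrow> real \<Rightarrow> 'a \<Rightarrow> 'a \<Rightarrow> ennreal" where
  "exp_freq V E p lam h i =
     (\<integral>\<^sup>+ w. (if w \<noteq> [] \<and> hd w = h then ennreal (walk_prob V E p w * freq lam w i) else 0)
        \<partial>count_space UNIV)"

definition rw_kernel :: "'a set \<Rightarrow> ('a \<Rightarrow> 'a \<Rightarrow> bool) \<Rightarrow> real \<Rightarrow> real \<Rightarrow> 'a \<Rightarrow> 'a \<Rightarrow> ennreal" where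
  "rw_kernel V E p lam k l = (\<Sum>i\<in>V. exp_freq V E p lam k i * exp_freq V E p lam l i)"

fun adj_pow :: "'a set \<Rightarrow> ('a \<Rightarrow> 'a \<Rightarrow> bool) \<Rightarrow> nat \<Rightarrow> 'a \<Rightarrow> 'a \<Rightarrow> real" where
  "adj_pow V E 0 k l = (if k = l then 1 else 0)"
| "adj_pow V E (Suc n) k l = (\<Sum>u\<in>V. (if E k u then 1 else 0) * adj_pow V E n u l)"

definition Gamma_adj :: "'a set \<Rightarrow> ('a \<Rightarrow> 'a \<Rightarrow> bool) \<Rightarrow> real \<Rightarrow> 'a \<Rightarrow> 'a \<Rightarrow> ennreal" where
  "Gamma_adj V E c k l = (\<Sum>i. ennreal (real (i + 1) * c ^ i * adj_pow V E i k l))"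

end

theory Submission
  imports Defs
begin

lemma ennreal_suminf_swap:
  fixes f :: "nat \<Rightarrow> nat \<Rightarrow> ennreal"
  shows "(\<Sum>i. \<Sum>j. f i j) = (\<Sum>j. \<Sum>i. f i j)"
proof -
  have "(\<Sum>j. \<Sum>i. f i j) = (\<integral>\<^sup>+j. (\<Sum>i. f i j) \<partial>count_space UNIV)"
    by (simp add: nn_integral_count_space_nat)
  also have "\<dots> = (\<Sum>i. \<integral>\<^sup>+j. f i j \<partial>count_space UNIV)"
    by (rule nn_integral_suminf) simp
  also have "\<dots> = (\<Sum>i. \<Sum>j. f i j)"
    by (simp add: nn_integral_count_space_nat)
  finally show ?thesis ..
qed

lemma ennreal_suminf_shift:
  fixes F :: "nat \<Rightarrow> ennreal"
  shows "(\<Sum>m. F (m + r)) = (\<Sum>n. if r \<le> n then F n else 0)"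
proof -
  have "(\<Sum>m. (\<lambda>n. if r \<le> n then F n else 0) ((\<lambda>m. m + r) m)) = (\<Sum>n. if r \<le> n then F n else 0)"
    by (rule suminf_mono_reindex) (auto simp: strict_mono_def image_iff, metis le_add_diff_inverse2)
  then show ?thesis by simp
qed

lemma ennreal_cauchy:
  fixes F :: "nat \<Rightarrow> ennreal"
  shows "(\<Sum>r. \<Sum>s. F (r + s)) = (\<Sum>n. of_nat (n+1) * F n)"
proof -
  have "(\<Sum>r. \<Sum>s. F (r + s)) = (\<Sum>r. \<Sum>n. if r \<le> n then F n else 0)"
    using ennreal_suminf_shift by (simp add: add.commute)
  also have "\<dots> = (\<Sum>n. \<Sum>r. if r \<le> n then F n else 0)"
    by (rule ennreal_suminf_swap)
  also have "\<dots> = (\<Sum>n. of_nat (n+1) * F n)"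
  proof (rule suminf_cong)
    fix n
    have "(\<Sum>r. if r \<le> n then F n else 0) = (\<Sum>r<Suc n. if r \<le> n then F n else 0)"
      by (rule suminf_finite) auto
    also have "\<dots> = of_nat (n+1) * F n" by simp
    finally show "(\<Sum>r. if r \<le> n then F n else 0) = of_nat (n+1) * F n" .
  qed
  finally show ?thesis .
qed


definition tr :: "'a set \<Rightarrow> ('a \<Rightarrow> 'a \<Rightarrow> bool) \<Rightarrow> 'a \<Rightarrow> 'a \<Rightarrow> real" where
  "tr V E a b = (if E a b then 1 / real (deg V E a) else 0)"

fun tp :: "'a set \<Rightarrow> ('a \<Rightarrow> 'a \<Rightarrow> bool) \<Rightarrow> nat \<Rightarrow> 'a \<Rightarrow> 'a \<Rightarrow> real" where
  "tp V E 0 a b = (if a = b then 1 else 0)"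
| "tp V E (Suc r) a b = (\<Sum>u\<in>V. tr V E a u * tp V E r u b)"

definition gw :: "'a set \<Rightarrow> ('a \<Rightarrow> 'a \<Rightarrow> bool) \<Rightarrow> 'a list \<Rightarrow> real" where
  "gw V E w = (\<Prod>s<length w - 1. tr V E (w ! s) (w ! Suc s))"

definition Ln :: "'a set \<Rightarrow> nat \<Rightarrow> 'a list set" where
  "Ln V n = {w. set w \<subseteq> V \<and> length w = Suc n}"

lemma delta_mult: "(if a = b then 1 else 0) * (x::real) = (if a = b then x else 0)"
  "(x::real) * (if a = b then 1 else 0) = (if a = b then x else 0)" by simp_all

lemma tr_nonneg: "0 \<le> tr V E a b" by (simp add: tr_def)

lemma tp_nonneg: "0 \<le> tp V E r a b"
  by (induction r arbitrary: a) (auto intro!: sum_nonneg mult_nonneg_nonneg tr_nonneg)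

lemma gw_nonneg: "0 \<le> gw V E w"
  by (simp add: gw_def prod_nonneg tr_nonneg)

lemma gw_Cons: "w \<noteq> [] \<Longrightarrow> gw V E (h # w) = tr V E h (hd w) * gw V E w"
proof -
  assume "w \<noteq> []"
  then obtain m where m: "length w = Suc m" by (cases w) auto
  have "gw V E (h # w) = (\<Prod>s<Suc m. tr V E ((h#w) ! s) ((h#w) ! Suc s))"
    by (simp add: gw_def m)
  also have "\<dots> = tr V E h (w ! 0) * (\<Prod>s<m. tr V E (w ! s) (w ! Suc s))"
    by (subst prod.lessThan_Suc_shift) simp
  also have "\<dots> = tr V E h (hd w) * gw V E w"
    using \<open>w \<noteq> []\<close> by (simp add: gw_def m hd_conv_nth)
  finally show ?thesis .
qed

lemma walk_prob_gw: "w \<in> Ln V n \<Longrightarrow> walk_prob V E p w = p * (1-p)^n * gw V E w"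
  by (simp add: walk_prob_def gw_def Ln_def tr_def)

lemma finite_Ln: "finite V \<Longrightarrow> finite (Ln V n)"
  unfolding Ln_def by (rule finite_lists_length_eq)

lemma Ln_Suc_hd: "{w \<in> Ln V (Suc n). hd w = h} = (if h \<in> V then (Cons h) ` Ln V n else {})"
proof (cases "h \<in> V")
  case True
  have "w \<in> (Cons h) ` Ln V n" if "w \<in> Ln V (Suc n)" "hd w = h" for w
    using that by (cases w) (auto simp: Ln_def)
  then show ?thesis using True by (auto simp: Ln_def)
next
  case False
  then show ?thesis by (auto simp: Ln_def) (metis hd_in_set list.size(3) nat.distinct(1) subsetD)
qed

context
  fixes V :: "'a set" and E :: "'a \<Rightarrow> 'a \<Rightarrow> bool"
  assumes G: "ugraph V E" and NI: "no_isolated V E"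
begin

lemma finV: "finite V" using G by (simp add: ugraph_def)

lemma EV: "E x y \<Longrightarrow> x \<in> V \<and> y \<in> V \<and> E y x"
  using G by (simp add: ugraph_def)

lemma deg_pos: "v \<in> V \<Longrightarrow> deg V E v > 0"
proof -
  assume v: "v \<in> V"
  then obtain u where "E v u" using NI by (auto simp: no_isolated_def)
  then have "u \<in> {u \<in> V. E v u}" using EV by auto
  then show ?thesis unfolding deg_def using finV by (auto simp: card_gt_0_iff)
qed

lemma tr_sum: "v \<in> V \<Longrightarrow> (\<Sum>u\<in>V. tr V E v u) = 1"
proof -
  assume v: "v \<in> V"
  have "(\<Sum>u\<in>V. tr V E v u) = (\<Sum>u\<in>{u\<in>V. E v u}. 1 / real (deg V E v))"
    by (simp add: tr_def sum.inter_filter[OF finV, symmetric])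
  also have "\<dots> = 1" using deg_pos[OF v] by (simp add: deg_def)
  finally show ?thesis .
qed

lemma key:
  assumes "h \<in> V" "r \<le> n"
  shows "(\<Sum>w\<in>{w \<in> Ln V n. hd w = h}. gw V E w * (if w ! r = i then 1 else 0)) = tp V E r h i"
  using assms
proof (induction n arbitrary: h r i)
  case 0
  have "{w \<in> Ln V 0. hd w = h} = {[h]}"
    using 0 by (auto simp: Ln_def length_Suc_conv)
  then show ?case using 0 by (simp add: gw_def)
next
  case (Suc n)
  let ?S = "\<lambda>u. {w \<in> Ln V n. hd w = u}"
  have ne: "w \<in> Ln V n \<Longrightarrow> w \<noteq> []" for w by (auto simp: Ln_def)
  have "(\<Sum>w\<in>{w \<in> Ln V (Suc n). hd w = h}. gw V E w * (if w ! r = i then 1 else 0))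
      = (\<Sum>w\<in>Ln V n. gw V E (h # w) * (if (h # w) ! r = i then 1 else 0))"
    using Suc.prems by (simp add: Ln_Suc_hd sum.reindex)
  also have "\<dots> = (\<Sum>w\<in>Ln V n. tr V E h (hd w) * (gw V E w * (if (h # w) ! r = i then 1 else 0)))"
    by (intro sum.cong refl) (simp add: gw_Cons ne)
  also have "\<dots> = (\<Sum>u\<in>V. \<Sum>w\<in>?S u. tr V E h (hd w) * (gw V E w * (if (h # w) ! r = i then 1 else 0)))"
    by (rule sum.group[symmetric]) (auto simp: finite_Ln[OF finV, unfolded Ln_def] finV Ln_def, metis hd_in_set list.size(3) nat.distinct(1) subsetD)
  also have "\<dots> = (\<Sum>u\<in>V. tr V E h u * (\<Sum>w\<in>?S u. gw V E w * (if (h # w) ! r = i then 1 else 0)))"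
    by (simp add: sum_distrib_left)
  also have "\<dots> = tp V E r h i"
  proof (cases r)
    case 0
    have "(\<Sum>w\<in>?S u. gw V E w * (if (h # w) ! r = i then 1 else 0)) = (if h = i then 1 else 0)"
      if u: "u \<in> V" for u
    proof -
      have "(\<Sum>w\<in>?S u. gw V E w * (if (h # w) ! r = i then 1 else 0))
          = (if h = i then 1 else 0) * (\<Sum>w\<in>?S u. gw V E w * (if w ! 0 = u then 1 else 0))"
        using 0 by (auto simp: sum_distrib_left hd_conv_nth ne intro!: sum.cong)
      also have "\<dots> = (if h = i then 1 else 0)" using Suc.IH[OF u, of 0 u] by simp
      finally show ?thesis .
    qed
    note inner = this
    have "(\<Sum>u\<in>V. tr V E h u * (\<Sum>w\<in>?S u. gw V E w * (if (h # w) ! r = i then 1 else 0)))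
        = (\<Sum>u\<in>V. tr V E h u * (if h = i then 1 else 0))"
      by (rule sum.cong) (simp_all only: inner)
    also have "\<dots> = (\<Sum>u\<in>V. tr V E h u) * (if h = i then 1 else 0)"
      by (rule sum_distrib_right[symmetric])
    finally show ?thesis using 0 tr_sum[OF Suc.prems(1)] by simp
  next
    case (Suc r')
    have "(\<Sum>w\<in>?S u. gw V E w * (if (h # w) ! r = i then 1 else 0)) = tp V E r' u i"
      if u: "u \<in> V" for u
      using Suc.IH[OF u, of r' i] Suc \<open>r \<le> Suc n\<close> by simp
    then show ?thesis using Suc by simp
  qed
  finally show ?case .
qed


lemma support:
  assumes h: "h \<in> V" and ne: "w \<noteq> []" and hd: "hd w = h" and nz: "walk_prob V E p w \<noteq> 0"
  shows "set w \<subseteq> V"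
proof
  fix x assume "x \<in> set w"
  then obtain j where j: "j < length w" "w ! j = x" by (auto simp: in_set_conv_nth)
  have pr: "(\<Prod>s<length w - 1. if E (w ! s) (w ! Suc s) then 1 / real (deg V E (w ! s)) else 0) \<noteq> 0"
    using nz by (auto simp: walk_prob_def)
  show "x \<in> V"
  proof (cases j)
    case 0 then show ?thesis using j ne hd h by (simp add: hd_conv_nth)
  next
    case (Suc j')
    then have "j' < length w - 1" using j by simp
    then have "E (w ! j') (w ! Suc j')" using pr by (auto simp: prod_zero_iff split: if_splits)
    then show ?thesis using EV j Suc by auto
  qed
qed

lemma exp_freq_len:
  assumes h: "h \<in> V" and p: "0 \<le> p" "p \<le> 1" and lam: "0 \<le> lam"
  shows "exp_freq V E p lam h i = (\<Sum>n. ennreal (p * (1-p)^n * (\<Sum>r<Suc n. lam^r * tp V E r h i)))"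
proof -
  define f where "f w = (if w \<noteq> [] \<and> hd w = h then ennreal (walk_prob V E p w * freq lam w i) else 0)" for w
  have wp_nonneg: "0 \<le> walk_prob V E p w" for w
    using p by (auto simp: walk_prob_def intro!: mult_nonneg_nonneg prod_nonneg)
  have fr_nonneg: "0 \<le> freq lam w i" for w
    using lam by (auto simp: freq_def intro!: sum_nonneg)
  have f_split: "f w = (\<Sum>n. if length w = Suc n then f w else 0)" for w
  proof (cases "w = []")
    case True then show ?thesis by (simp add: f_def)
  next
    case False
    then have "(\<lambda>n. if length w = Suc n then f w else 0) = (\<lambda>n. if n = length w - 1 then f w else 0)"
      by (auto simp: fun_eq_iff)
    moreover have "(\<lambda>n. if n = length w - 1 then f w else 0) sums f w"
      using sums_single[of "length w - 1" "\<lambda>_. f w"] by simp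
    ultimately show ?thesis by (simp add: sums_iff)
  qed
  have "exp_freq V E p lam h i = (\<integral>\<^sup>+w. f w \<partial>count_space UNIV)"
    by (simp add: exp_freq_def f_def)
  also have "\<dots> = (\<integral>\<^sup>+w. (\<Sum>n. if length w = Suc n then f w else 0) \<partial>count_space UNIV)"
    by (subst f_split) (rule refl)
  also have "\<dots> = (\<Sum>n. \<integral>\<^sup>+w. (if length w = Suc n then f w else 0) \<partial>count_space UNIV)"
    by (rule nn_integral_suminf) simp
  also have "\<dots> = (\<Sum>n. ennreal (p * (1-p)^n * (\<Sum>r<Suc n. lam^r * tp V E r h i)))"
  proof (rule suminf_cong)
    fix n
    have "(\<integral>\<^sup>+w. (if length w = Suc n then f w else 0) \<partial>count_space UNIV)
        = (\<Sum>w\<in>Ln V n. (if length w = Suc n then f w else 0))"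
    proof (rule nn_integral_count_space')
      show "finite (Ln V n)" by (rule finite_Ln[OF finV])
      fix w assume "w \<notin> Ln V n"
      then show "(if length w = Suc n then f w else 0) = 0"
        using support[OF h, of w p] by (auto simp: f_def Ln_def) (metis mult_zero_left ennreal_0 subsetD)
    qed simp
    also have "\<dots> = (\<Sum>w\<in>Ln V n. ennreal (if hd w = h then walk_prob V E p w * freq lam w i else 0))"
      by (intro sum.cong refl) (auto simp: f_def Ln_def)
    also have "\<dots> = ennreal (\<Sum>w\<in>Ln V n. (if hd w = h then walk_prob V E p w * freq lam w i else 0))"
      using wp_nonneg fr_nonneg by (intro sum_ennreal) simp
    also have "(\<Sum>w\<in>Ln V n. (if hd w = h then walk_prob V E p w * freq lam w i else 0))
        = (\<Sum>w\<in>{w\<in>Ln V n. hd w = h}. walk_prob V E p w * freq lam w i)"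
      by (simp add: sum.inter_filter[OF finite_Ln[OF finV]])
    also have "\<dots> = (\<Sum>w\<in>{w\<in>Ln V n. hd w = h}. p * (1-p)^n * (\<Sum>r<Suc n. lam^r * (gw V E w * (if w ! r = i then 1 else 0))))"
    proof (intro sum.cong refl)
      fix w assume w: "w \<in> {w\<in>Ln V n. hd w = h}"
      have fr: "freq lam w i = (\<Sum>r<Suc n. if w ! r = i then lam^r else 0)"
        using w by (simp add: freq_def Ln_def)
      have "(\<Sum>r<Suc n. lam^r * (gw V E w * (if w ! r = i then 1 else 0)))
          = gw V E w * (\<Sum>r<Suc n. if w ! r = i then lam^r else 0)"
        by (subst sum_distrib_left) (intro sum.cong refl, simp)
      then show "walk_prob V E p w * freq lam w i = p * (1-p)^n * (\<Sum>r<Suc n. lam^r * (gw V E w * (if w ! r = i then 1 else 0)))"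
      proof -
        have wL: "w \<in> Ln V n" using w by simp
        show ?thesis unfolding walk_prob_gw[OF wL] fr \<open>_ = gw V E w * _\<close> by (simp only: mult_ac)
      qed
    qed
    also have "\<dots> = p * (1-p)^n * (\<Sum>r<Suc n. lam^r * (\<Sum>w\<in>{w\<in>Ln V n. hd w = h}. gw V E w * (if w ! r = i then 1 else 0)))"
      by (subst sum_distrib_left[symmetric], rule arg_cong[where f="\<lambda>x. p * (1-p)^n * x"],
          subst sum.swap, simp only: sum_distrib_left)
    also have "\<dots> = p * (1-p)^n * (\<Sum>r<Suc n. lam^r * tp V E r h i)"
      using key[OF h] by simp
    finally show "(\<integral>\<^sup>+w. (if length w = Suc n then f w else 0) \<partial>count_space UNIV)
        = ennreal (p * (1-p)^n * (\<Sum>r<Suc n. lam^r * tp V E r h i))" .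
  qed
  finally show ?thesis .
qed


lemma exp_freq_closed:
  assumes h: "h \<in> V" and p: "0 < p" "p < 1" and lam: "0 \<le> lam"
  shows "exp_freq V E p lam h i = (\<Sum>r. ennreal (((1-p)*lam)^r * tp V E r h i))"
proof -
  let ?q = "1 - p"
  have geo: "(\<Sum>m. ennreal (p * ?q^(m+r))) = ennreal (?q^r)" for r
  proof -
    have "(\<lambda>m. ?q^m) sums (1 / (1 - ?q))" using p by (intro geometric_sums) simp
    then have "(\<lambda>m. (p * ?q^r) * ?q^m) sums ((p * ?q^r) * (1 / (1 - ?q)))" by (rule sums_mult)
    then have "(\<lambda>m. p * ?q^(m+r)) sums (?q^r)" using p by (simp add: power_add mult_ac)
    then have "(\<lambda>m. ennreal (p * ?q^(m+r))) sums ennreal (?q^r)" using p by simp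
    then show ?thesis by (rule sums_unique[symmetric])
  qed
  have nn: "0 \<le> lam^r * tp V E r h i" for r using lam by (simp add: tp_nonneg)
  have "exp_freq V E p lam h i = (\<Sum>n. ennreal (p * ?q^n * (\<Sum>r<Suc n. lam^r * tp V E r h i)))"
    using exp_freq_len[OF h _ _ lam] p by simp
  also have "\<dots> = (\<Sum>n. \<Sum>r<Suc n. ennreal (p * ?q^n * (lam^r * tp V E r h i)))"
  proof (intro suminf_cong)
    fix n
    show "ennreal (p * ?q^n * (\<Sum>r<Suc n. lam^r * tp V E r h i)) = (\<Sum>r<Suc n. ennreal (p * ?q^n * (lam^r * tp V E r h i)))"
      by (simp only: sum_distrib_left, rule sum_ennreal[symmetric]) (use p nn in \<open>simp add: mult_nonneg_nonneg\<close>)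
  qed
  also have "\<dots> = (\<Sum>n. \<Sum>r. if r \<le> n then ennreal (p * ?q^n * (lam^r * tp V E r h i)) else 0)"
  proof (intro suminf_cong)
    fix n
    let ?g = "\<lambda>r. ennreal (p * ?q^n * (lam^r * tp V E r h i))"
    have "(\<Sum>r. if r \<le> n then ?g r else 0) = (\<Sum>r<Suc n. if r \<le> n then ?g r else 0)"
      by (rule suminf_finite) auto
    then show "(\<Sum>r<Suc n. ?g r) = (\<Sum>r. if r \<le> n then ?g r else 0)" by simp
  qed
  also have "\<dots> = (\<Sum>r. \<Sum>n. if r \<le> n then ennreal (p * ?q^n * (lam^r * tp V E r h i)) else 0)"
    by (rule ennreal_suminf_swap[symmetric])
  also have "\<dots> = (\<Sum>r. \<Sum>m. ennreal (p * ?q^(m+r) * (lam^r * tp V E r h i)))"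
  proof (rule suminf_cong)
    fix r
    show "(\<Sum>n. if r \<le> n then ennreal (p * ?q^n * (lam^r * tp V E r h i)) else 0)
        = (\<Sum>m. ennreal (p * ?q^(m+r) * (lam^r * tp V E r h i)))"
      by (rule ennreal_suminf_shift[where F="\<lambda>n. ennreal (p * ?q^n * (lam^r * tp V E r h i))", symmetric])
  qed
  also have "\<dots> = (\<Sum>r. (\<Sum>m. ennreal (p * ?q^(m+r))) * ennreal (lam^r * tp V E r h i))"
  proof (rule suminf_cong)
    fix r
    have "ennreal (p * ?q^(m+r) * (lam^r * tp V E r h i)) = ennreal (p * ?q^(m+r)) * ennreal (lam^r * tp V E r h i)" for m
      using p nn by (intro ennreal_mult) simp_all
    then show "(\<Sum>m. ennreal (p * ?q^(m+r) * (lam^r * tp V E r h i))) = (\<Sum>m. ennreal (p * ?q^(m+r))) * ennreal (lam^r * tp V E r h i)"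
      by (simp only: ennreal_suminf_multc)
  qed
  also have "\<dots> = (\<Sum>r. ennreal ((?q*lam)^r * tp V E r h i))"
  proof (rule suminf_cong)
    fix r
    have "ennreal (?q^r) * ennreal (lam ^ r * tp V E r h i) = ennreal (?q^r * (lam ^ r * tp V E r h i))"
      using p nn by (intro ennreal_mult[symmetric]) simp_all
    then show "(\<Sum>m. ennreal (p * ?q^(m+r))) * ennreal (lam^r * tp V E r h i) = ennreal ((?q*lam)^r * tp V E r h i)"
      by (simp add: geo power_mult_distrib mult_ac)
  qed
  finally show ?thesis .
qed

lemma adj_nonneg: "0 \<le> adj_pow V E n k l"
  by (induction n arbitrary: k) (auto intro!: sum_nonneg)

lemma adj_add: "k \<in> V \<Longrightarrow> adj_pow V E (r + s) k l = (\<Sum>i\<in>V. adj_pow V E r k i * adj_pow V E s i l)"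
proof (induction r arbitrary: k)
  case 0 then show ?case by (simp add: finV delta_mult)
next
  case (Suc r)
  have "adj_pow V E (Suc r + s) k l = (\<Sum>u\<in>V. (if E k u then 1 else 0) * adj_pow V E (r + s) u l)" by simp
  also have "\<dots> = (\<Sum>u\<in>V. (if E k u then 1 else 0) * (\<Sum>i\<in>V. adj_pow V E r u i * adj_pow V E s i l))"
    by (intro sum.cong refl) (auto simp: Suc.IH)
  also have "\<dots> = (\<Sum>u\<in>V. \<Sum>i\<in>V. (if E k u then 1 else 0) * adj_pow V E r u i * adj_pow V E s i l)"
    by (simp only: sum_distrib_left mult.assoc)
  also have "\<dots> = (\<Sum>i\<in>V. \<Sum>u\<in>V. (if E k u then 1 else 0) * adj_pow V E r u i * adj_pow V E s i l)"
    by (rule sum.swap)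
  also have "\<dots> = (\<Sum>i\<in>V. adj_pow V E (Suc r) k i * adj_pow V E s i l)"
    by (simp only: adj_pow.simps sum_distrib_right)
  finally show ?case .
qed

lemma adj_one: "i \<in> V \<Longrightarrow> l \<in> V \<Longrightarrow> adj_pow V E 1 i l = (if E i l then 1 else 0)"
  by (simp add: finV delta_mult)

lemma adj_sym: "k \<in> V \<Longrightarrow> l \<in> V \<Longrightarrow> adj_pow V E n k l = adj_pow V E n l k"
proof (induction n arbitrary: k l)
  case 0 then show ?case by simp
next
  case (Suc n)
  have "adj_pow V E (Suc n) k l = (\<Sum>u\<in>V. (if E k u then 1 else 0) * adj_pow V E n u l)" by simp
  also have "\<dots> = (\<Sum>u\<in>V. adj_pow V E n l u * adj_pow V E 1 u k)"
  proof (intro sum.cong refl)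
    fix u assume u: "u \<in> V"
    show "(if E k u then 1 else 0) * adj_pow V E n u l = adj_pow V E n l u * adj_pow V E 1 u k"
    proof (cases "E k u")
      case True
      then have "E u k" using EV by blast
      then show ?thesis using True Suc.IH[OF u Suc.prems(2)] adj_one[OF u Suc.prems(1)] by simp
    next
      case False
      then have "\<not> E u k" using EV by blast
      then show ?thesis using False adj_one[OF u Suc.prems(1)] by simp
    qed
  qed
  also have "\<dots> = adj_pow V E (Suc n) l k"
    using adj_add[OF Suc.prems(2), of n 1 k] by simp
  finally show ?case .
qed


lemma dmin_le: "v \<in> V \<Longrightarrow> dmin V E \<le> deg V E v"
  unfolding dmin_def using finV by (intro Min_le) auto

lemma dmax_ge: "v \<in> V \<Longrightarrow> deg V E v \<le> dmax V E"
  unfolding dmax_def using finV by (intro Max_ge) auto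

lemma dmin_pos: "V \<noteq> {} \<Longrightarrow> 0 < dmin V E"
proof -
  assume "V \<noteq> {}"
  then have "dmin V E \<in> deg V E ` V" unfolding dmin_def using finV by (intro Min_in) auto
  then show ?thesis using deg_pos by auto
qed

lemma dmax_pos: "V \<noteq> {} \<Longrightarrow> 0 < dmax V E"
proof -
  assume "V \<noteq> {}"
  then obtain v where "v \<in> V" by auto
  then show ?thesis using deg_pos[of v] dmax_ge[of v] by linarith
qed

lemma tp_upper:
  assumes "V \<noteq> {}"
  shows "tp V E r a b \<le> adj_pow V E r a b / real (dmin V E) ^ r"
proof (induction r arbitrary: a)
  case 0 then show ?case by simp
next
  case (Suc r)
  let ?d = "real (dmin V E)"
  have d: "0 < ?d" using dmin_pos[OF assms] by simp
  have "tp V E (Suc r) a b = (\<Sum>u\<in>V. tr V E a u * tp V E r u b)" by simp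
  also have "\<dots> \<le> (\<Sum>u\<in>V. ((if E a u then 1 else 0) / ?d) * (adj_pow V E r u b / ?d ^ r))"
  proof (intro sum_mono mult_mono)
    fix u
    show "tr V E a u \<le> (if E a u then 1 else 0) / ?d"
    proof (cases "E a u")
      case True
      then have "a \<in> V" using EV by blast
      then have "?d \<le> real (deg V E a)" using dmin_le by simp
      then show ?thesis using True d by (simp add: tr_def frac_le)
    qed (simp add: tr_def)
  qed (use Suc.IH d tp_nonneg in auto)
  also have "\<dots> = adj_pow V E (Suc r) a b / ?d ^ Suc r"
    by (simp add: sum_divide_distrib)
  finally show ?case .
qed

lemma tp_lower:
  assumes "V \<noteq> {}"
  shows "adj_pow V E r a b / real (dmax V E) ^ r \<le> tp V E r a b"
proof (induction r arbitrary: a)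
  case 0 then show ?case by simp
next
  case (Suc r)
  let ?d = "real (dmax V E)"
  have d: "0 < ?d" using dmax_pos[OF assms] by simp
  have "adj_pow V E (Suc r) a b / ?d ^ Suc r = (\<Sum>u\<in>V. ((if E a u then 1 else 0) / ?d) * (adj_pow V E r u b / ?d ^ r))"
    by (simp add: sum_divide_distrib)
  also have "\<dots> \<le> (\<Sum>u\<in>V. tr V E a u * tp V E r u b)"
  proof (intro sum_mono mult_mono)
    fix u
    show "(if E a u then 1 else 0) / ?d \<le> tr V E a u"
    proof (cases "E a u")
      case True
      then have "a \<in> V" using EV by blast
      then have "real (deg V E a) \<le> ?d" using dmax_ge by simp
      then show ?thesis using True d deg_pos[OF \<open>a \<in> V\<close>] by (simp add: tr_def frac_le)
    qed (simp add: tr_def)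
  qed (use Suc.IH d tr_nonneg adj_nonneg in auto)
  also have "\<dots> = tp V E (Suc r) a b" by simp
  finally show ?case .
qed

lemma gamma_eq:
  assumes c: "0 \<le> c" and k: "k \<in> V" and l: "l \<in> V"
  shows "(\<Sum>i\<in>V. (\<Sum>r. ennreal (c^r * adj_pow V E r k i)) * (\<Sum>s. ennreal (c^s * adj_pow V E s l i)))
       = Gamma_adj V E c k l"
proof -
  let ?a = "\<lambda>r i. ennreal (c^r * adj_pow V E r k i)"
  let ?b = "\<lambda>s i. ennreal (c^s * adj_pow V E s l i)"
  have "(\<Sum>i\<in>V. (\<Sum>r. ?a r i) * (\<Sum>s. ?b s i)) = (\<Sum>i\<in>V. \<Sum>r. \<Sum>s. ?a r i * ?b s i)"
    by (simp only: ennreal_suminf_multc ennreal_suminf_cmult)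
  also have "\<dots> = (\<Sum>r. \<Sum>i\<in>V. \<Sum>s. ?a r i * ?b s i)"
    by (rule suminf_sum[symmetric]) simp
  also have "\<dots> = (\<Sum>r. \<Sum>s. \<Sum>i\<in>V. ?a r i * ?b s i)"
    by (intro suminf_cong suminf_sum[symmetric]) simp
  also have "\<dots> = (\<Sum>r. \<Sum>s. ennreal (c^(r+s) * adj_pow V E (r+s) k l))"
  proof (intro suminf_cong)
    fix r s
    have "(\<Sum>i\<in>V. ?a r i * ?b s i) = (\<Sum>i\<in>V. ennreal (c^r * adj_pow V E r k i * (c^s * adj_pow V E s l i)))"
      using c adj_nonneg by (intro sum.cong refl ennreal_mult[symmetric]) simp_all
    also have "\<dots> = ennreal (\<Sum>i\<in>V. c^r * adj_pow V E r k i * (c^s * adj_pow V E s l i))"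
      using c adj_nonneg by (intro sum_ennreal) simp
    also have "(\<Sum>i\<in>V. c^r * adj_pow V E r k i * (c^s * adj_pow V E s l i))
        = c^(r+s) * (\<Sum>i\<in>V. adj_pow V E r k i * adj_pow V E s i l)"
    proof (subst sum_distrib_left, rule sum.cong[OF refl])
      fix i assume i: "i \<in> V"
      show "c^r * adj_pow V E r k i * (c^s * adj_pow V E s l i) = c^(r+s) * (adj_pow V E r k i * adj_pow V E s i l)"
        using adj_sym[OF l i, of s] by (simp add: power_add)
    qed
    also have "\<dots> = c^(r+s) * adj_pow V E (r+s) k l" using adj_add[OF k] by simp
    finally show "(\<Sum>i\<in>V. ?a r i * ?b s i) = ennreal (c^(r+s) * adj_pow V E (r+s) k l)" .
  qed
  also have "\<dots> = (\<Sum>n. of_nat (n+1) * ennreal (c^n * adj_pow V E n k l))"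
    by (rule ennreal_cauchy)
  also have "\<dots> = Gamma_adj V E c k l"
    unfolding Gamma_adj_def
  proof (rule suminf_cong)
    fix n
    show "of_nat (n+1) * ennreal (c^n * adj_pow V E n k l) = ennreal (real (n + 1) * c ^ n * adj_pow V E n k l)"
    proof -
      have "of_nat (n+1) * ennreal (c^n * adj_pow V E n k l) = ennreal (real (n+1)) * ennreal (c^n * adj_pow V E n k l)"
        by (simp only: ennreal_of_nat_eq_real_of_nat)
      also have "\<dots> = ennreal (real (n+1) * (c^n * adj_pow V E n k l))"
        using c adj_nonneg by (intro ennreal_mult[symmetric]) simp_all
      finally show ?thesis by (simp only: mult.assoc)
    qed
  qed
  finally show ?thesis .
qed

end


theorem theorem4p2:
  fixes V :: "'a set" and E :: "'a \<Rightarrow> 'a \<Rightarrow> bool" and lam p :: real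
  assumes "ugraph V E" and "no_isolated V E"
    and "0 \<le> lam" and "lam \<le> 1" and "0 < p" and "p < 1"
  shows "\<forall>k\<in>V. \<forall>l\<in>V.
           Gamma_adj V E ((1 - p) * lam / real (dmax V E)) k l \<le> rw_kernel V E p lam k l
         \<and> rw_kernel V E p lam k l \<le> Gamma_adj V E ((1 - p) * lam / real (dmin V E)) k l"
proof (intro ballI conjI)
  fix k l assume k: "k \<in> V" and l: "l \<in> V"
  note G = assms(1,2)
  have Vne: "V \<noteq> {}" using k by auto
  define \<rho> where "\<rho> = (1 - p) * lam"
  have rho: "0 \<le> \<rho>" using assms by (simp add: \<rho>_def)
  have EF: "h \<in> V \<Longrightarrow> exp_freq V E p lam h i = (\<Sum>r. ennreal (\<rho>^r * tp V E r h i))" for h i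
    using exp_freq_closed[OF G _ assms(5,6,3)] by (simp add: \<rho>_def)
  have K: "rw_kernel V E p lam k l = (\<Sum>i\<in>V. (\<Sum>r. ennreal (\<rho>^r * tp V E r k i)) * (\<Sum>s. ennreal (\<rho>^s * tp V E s l i)))"
    unfolding rw_kernel_def using EF k l by simp
  let ?cM = "\<rho> / real (dmax V E)"
  let ?cm = "\<rho> / real (dmin V E)"
  have cM: "0 \<le> ?cM" using rho by simp
  have cm: "0 \<le> ?cm" using rho by simp
  have dM: "0 < real (dmax V E)" using dmax_pos[OF G Vne] by simp
  have dm: "0 < real (dmin V E)" using dmin_pos[OF G Vne] by simp
  have low: "ennreal (?cM^r * adj_pow V E r h i) \<le> ennreal (\<rho>^r * tp V E r h i)" for r h i
  proof (rule ennreal_leI)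
    have "?cM^r * adj_pow V E r h i = \<rho>^r * (adj_pow V E r h i / real (dmax V E) ^ r)"
      by (simp add: power_divide)
    also have "\<dots> \<le> \<rho>^r * tp V E r h i"
      using tp_lower[OF G Vne] rho by (intro mult_left_mono) simp_all
    finally show "?cM^r * adj_pow V E r h i \<le> \<rho>^r * tp V E r h i" .
  qed
  have up: "ennreal (\<rho>^r * tp V E r h i) \<le> ennreal (?cm^r * adj_pow V E r h i)" for r h i
  proof (rule ennreal_leI)
    have "\<rho>^r * tp V E r h i \<le> \<rho>^r * (adj_pow V E r h i / real (dmin V E) ^ r)"
      using tp_upper[OF G Vne] rho by (intro mult_left_mono) simp_all
    also have "\<dots> = ?cm^r * adj_pow V E r h i"
      by (simp add: power_divide)
    finally show "\<rho>^r * tp V E r h i \<le> ?cm^r * adj_pow V E r h i" .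
  qed
  have "Gamma_adj V E ?cM k l = (\<Sum>i\<in>V. (\<Sum>r. ennreal (?cM^r * adj_pow V E r k i)) * (\<Sum>s. ennreal (?cM^s * adj_pow V E s l i)))"
    using gamma_eq[OF G cM k l] by (rule sym)
  also have "\<dots> \<le> rw_kernel V E p lam k l"
    unfolding K
  proof (rule sum_mono)
    fix i assume "i \<in> V"
    have a: "(\<Sum>r. ennreal (?cM^r * adj_pow V E r k i)) \<le> (\<Sum>r. ennreal (\<rho>^r * tp V E r k i))"
      by (rule suminf_le) (rule low, rule summableI, rule summableI)
    have b: "(\<Sum>r. ennreal (?cM^r * adj_pow V E r l i)) \<le> (\<Sum>r. ennreal (\<rho>^r * tp V E r l i))"
      by (rule suminf_le) (rule low, rule summableI, rule summableI)
    show "(\<Sum>r. ennreal (?cM^r * adj_pow V E r k i)) * (\<Sum>s. ennreal (?cM^s * adj_pow V E s l i))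
        \<le> (\<Sum>r. ennreal (\<rho>^r * tp V E r k i)) * (\<Sum>s. ennreal (\<rho>^s * tp V E s l i))"
      by (rule mult_mono[OF a b]) (rule zero_le, rule zero_le)
  qed
  finally show "Gamma_adj V E ((1 - p) * lam / real (dmax V E)) k l \<le> rw_kernel V E p lam k l"
    by (simp only: \<rho>_def)
  have "rw_kernel V E p lam k l \<le> (\<Sum>i\<in>V. (\<Sum>r. ennreal (?cm^r * adj_pow V E r k i)) * (\<Sum>s. ennreal (?cm^s * adj_pow V E s l i)))"
    unfolding K
  proof (rule sum_mono)
    fix i assume "i \<in> V"
    have a: "(\<Sum>r. ennreal (\<rho>^r * tp V E r k i)) \<le> (\<Sum>r. ennreal (?cm^r * adj_pow V E r k i))"
      by (rule suminf_le) (rule up, rule summableI, rule summableI)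
    have b: "(\<Sum>r. ennreal (\<rho>^r * tp V E r l i)) \<le> (\<Sum>r. ennreal (?cm^r * adj_pow V E r l i))"
      by (rule suminf_le) (rule up, rule summableI, rule summableI)
    show "(\<Sum>r. ennreal (\<rho>^r * tp V E r k i)) * (\<Sum>s. ennreal (\<rho>^s * tp V E s l i))
        \<le> (\<Sum>r. ennreal (?cm^r * adj_pow V E r k i)) * (\<Sum>s. ennreal (?cm^s * adj_pow V E s l i))"
      by (rule mult_mono[OF a b]) (rule zero_le, rule zero_le)
  qed
  also have "\<dots> = Gamma_adj V E ?cm k l"
    using gamma_eq[OF G cm k l] .
  finally show "rw_kernel V E p lam k l \<le> Gamma_adj V E ((1 - p) * lam / real (dmin V E)) k l"
    by (simp only: \<rho>_def)
qed

end
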